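(* Let $\mathcal G$ be an almost-surely terminating CFG, and let $\sigma_0,\sigma_1,\sigma_2,\dots$ be an enumeration of $\mathsf{Reach}(\mathcal G)$ with $\sigma_0$ the terminal state. For $i,n\in\mathbb N$ define $$R(i,n)=\sup_{\mathfrak s}\mathbb P^i_{\mathfrak s}\big(\Diamond\{\sigma_m: m\ge n\}\big),$$ the supremum over schedulers of the probability that a run of $\mathcal G(\sigma_i)$ eventually visits some state of index at least $n$. Then for every $i\in\mathbb N$, $\lim_{n\to\infty}R(i,n)=0$.
   Context: A probabilistic control flow graph (CFG) is a tuple $\mathcal G=(L,V,l_{init},\mathbf x_{init},\mapsto,G,\mathsf{Pr},\mathsf{Upd})$. $L$ is a finite set of locations, partitioned into assignment, nondeterministic and probabilistic locations. The variables in $V$ range over $\mathbb Q$. $(l_{init},\mathbf x_{init})$ is the initial state. There are finitely many guarded transitions. At probabilistic locations, the outgoing transitions carry positive rational probabilities (given by arithmetic expressions in the variables) that sum to $1$ over enabled transitions. Assignment locations have at most one outgoing transition, carrying an update of one variable. A state is a pair $(l,\mathbf x)$, and successors are given by enabled transitions. Every state has at least one, and finitely many, successors. A scheduler $\mathfrak s$ maps finite paths ending in nondeterministic states to successors. $\mathbb P^i_{\mathfrak s}$ denotes the probability measure on runs of $\mathcal G(\sigma_i)$, which is $\mathcal G$ started at $\sigma_i$, induced by $\mathfrak s$. The terminal state is $\sigma_\bot=(l_{out},\mathbf 0)$. $\mathcal G$ is almost-surely terminating (AST) if $\inf_{\mathfrak s}\mathbb P_{\mathfrak s}[\text{run visits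 }\sigma_\bot]=1$. $\mathsf{Reach}(\mathcal G)$ is the set of states reachable by a finite path from the initial state. *)

theory Defs
  imports "HOL-Probability.Probability" "HOL-Library.Extended_Nat"
begin

text \<open>Guards, probability expressions and update expressions are represented semantically
  as functions of the valuation.\<close>

datatype loc_kind = AssignLoc | NondetLoc | ProbLoc

type_synonym 'v valuation = "'v \<Rightarrow> rat"
type_synonym ('l, 'v) state = "'l \<times> 'v valuation"

record ('l, 'v) transition =
  src   :: 'l
  tgt   :: 'l
  guard :: "'v valuation \<Rightarrow> bool"
  prb   :: "'v valuation \<Rightarrow> rat"
  upd   :: "('v \<times> ('v valuation \<Rightarrow> rat)) option"

record ('l, 'v) cfg =
  kind   :: "'l \<Rightarrow> loc_kind"
  l_init :: 'l
  x_init :: "'v valuation"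
  l_out  :: 'l
  trans  :: "('l, 'v) transition list"

definition enabled :: "('l, 'v) transition \<Rightarrow> ('l, 'v) state \<Rightarrow> bool" where
  "enabled \<tau> \<sigma> \<longleftrightarrow> src \<tau> = fst \<sigma> \<and> guard \<tau> (snd \<sigma>)"

definition eff :: "('l, 'v) transition \<Rightarrow> 'v valuation \<Rightarrow> 'v valuation" where
  "eff \<tau> x = (case upd \<tau> of None \<Rightarrow> x | Some (v, e) \<Rightarrow> x(v := e x))"

definition next_state :: "('l, 'v) transition \<Rightarrow> ('l, 'v) state \<Rightarrow> ('l, 'v) state" where
  "next_state \<tau> \<sigma> = (tgt \<tau>, eff \<tau> (snd \<sigma>))"

definition enabled_trans :: "('l, 'v) cfg \<Rightarrow> ('l, 'v) state \<Rightarrow> ('l, 'v) transition list" where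
  "enabled_trans G \<sigma> = filter (\<lambda>\<tau>. enabled \<tau> \<sigma>) (trans G)"

definition succs :: "('l, 'v) cfg \<Rightarrow> ('l, 'v) state \<Rightarrow> ('l, 'v) state set" where
  "succs G \<sigma> = (\<lambda>\<tau>. next_state \<tau> \<sigma>) ` set (enabled_trans G \<sigma>)"

definition term_state :: "('l, 'v) cfg \<Rightarrow> ('l, 'v) state" where
  "term_state G = (l_out G, (\<lambda>_. 0))"

definition init_state :: "('l, 'v) cfg \<Rightarrow> ('l, 'v) state" where
  "init_state G = (l_init G, x_init G)"

definition wf_cfg :: "('l, 'v) cfg \<Rightarrow> bool" where
  "wf_cfg G \<longleftrightarrow>
     \<comment> \<open>assignment locations have at most one outgoing transition, carrying an update;
         only transitions from assignment locations carry updates\<close>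
     (\<forall>l. kind G l = AssignLoc \<longrightarrow> length (filter (\<lambda>\<tau>. src \<tau> = l) (trans G)) \<le> 1) \<and>
     (\<forall>\<tau>\<in>set (trans G). (kind G (src \<tau>) = AssignLoc) \<longleftrightarrow> upd \<tau> \<noteq> None) \<and>
     \<comment> \<open>at probabilistic locations enabled transitions have positive probabilities summing to 1\<close>
     (\<forall>\<sigma>. kind G (fst \<sigma>) = ProbLoc \<longrightarrow>
        (\<forall>\<tau>\<in>set (enabled_trans G \<sigma>). prb \<tau> (snd \<sigma>) > 0) \<and>
        sum_list (map (\<lambda>\<tau>. prb \<tau> (snd \<sigma>)) (enabled_trans G \<sigma>)) = 1) \<and>
     \<comment> \<open>every state has at least one successor\<close>
     (\<forall>\<sigma>. succs G \<sigma> \<noteq> {})"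

definition Reach :: "('l, 'v) cfg \<Rightarrow> ('l, 'v) state set" where
  "Reach G = {\<sigma>. (init_state G, \<sigma>) \<in> {(a, b). b \<in> succs G a}\<^sup>*}"

type_synonym ('l, 'v) sched = "('l, 'v) state list \<Rightarrow> ('l, 'v) state"

definition valid_sched :: "('l, 'v) cfg \<Rightarrow> ('l, 'v) sched \<Rightarrow> bool" where
  "valid_sched G s \<longleftrightarrow>
     (\<forall>p. p \<noteq> [] \<and> kind G (fst (last p)) = NondetLoc \<longrightarrow> s p \<in> succs G (last p))"

definition step_prob :: "('l, 'v) cfg \<Rightarrow> ('l, 'v) sched \<Rightarrow> ('l, 'v) state list \<Rightarrow> ('l, 'v) state \<Rightarrow> real" where
  "step_prob G s p \<sigma>' =
     (let \<sigma> = last p in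
      case kind G (fst \<sigma>) of
        NondetLoc \<Rightarrow> (if s p = \<sigma>' then 1 else 0)
      | AssignLoc \<Rightarrow> (if \<sigma>' \<in> succs G \<sigma> then 1 else 0)
      | ProbLoc \<Rightarrow> sum_list (map (\<lambda>\<tau>. if next_state \<tau> \<sigma> = \<sigma>' then real_of_rat (prb \<tau> (snd \<sigma>)) else 0)
                                 (enabled_trans G \<sigma>)))"

fun path_prob_from :: "('l, 'v) cfg \<Rightarrow> ('l, 'v) sched \<Rightarrow> ('l, 'v) state list \<Rightarrow> ('l, 'v) state list \<Rightarrow> real" where
  "path_prob_from G s h [] = 1"
| "path_prob_from G s h (y # ys) = step_prob G s h y * path_prob_from G s (h @ [y]) ys"

fun cyl_prob :: "('l, 'v) cfg \<Rightarrow> ('l, 'v) sched \<Rightarrow> ('l, 'v) state \<Rightarrow> ('l, 'v) state list \<Rightarrow> real" where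
  "cyl_prob G s \<sigma>0 [] = 1"
| "cyl_prob G s \<sigma>0 (y # ys) = (if y = \<sigma>0 then 1 else 0) * path_prob_from G s [y] ys"

definition run_measure :: "('l, 'v) cfg \<Rightarrow> ('l, 'v) sched \<Rightarrow> ('l, 'v) state \<Rightarrow> ('l, 'v) state stream measure" where
  "run_measure G s \<sigma>0 =
     (SOME M. prob_space M \<and> sets M = sets (stream_space (count_space UNIV)) \<and>
        (\<forall>xs. emeasure M (sstart UNIV xs) = ennreal (cyl_prob G s \<sigma>0 xs)))"

definition prob_reach :: "('l, 'v) cfg \<Rightarrow> ('l, 'v) sched \<Rightarrow> ('l, 'v) state \<Rightarrow> ('l, 'v) state set \<Rightarrow> real" where
  "prob_reach G s \<sigma>0 T = measure (run_measure G s \<sigma>0) {\<omega>. \<exists>k. \<omega> !! k \<in> T}"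

definition AST :: "('l, 'v) cfg \<Rightarrow> bool" where
  "AST G \<longleftrightarrow> (INF s \<in> {s. valid_sched G s}. prob_reach G s (init_state G) {term_state G}) = 1"

end

theory Submission
  imports Defs "HOL-Library.Diagonal_Subsequence" "HOL-Library.Infinite_Set"
begin

fun pick :: "('t \<Rightarrow> real) \<Rightarrow> ('t \<Rightarrow> 'a) \<Rightarrow> 'a \<Rightarrow> 't list \<Rightarrow> real \<Rightarrow> real \<Rightarrow> 'a" where
  "pick p nx d [] c u = d"
| "pick p nx d (t # ts) c u = (if u < c + p t then nx t else pick p nx d ts (c + p t) u)"

lemma pick_measurable[measurable]:
  "(\<lambda>u. pick p nx d ts c u) \<in> borel \<rightarrow>\<^sub>M count_space UNIV"
proof (induction ts arbitrary: c)
  case Nil show ?case by simp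
next
  case (Cons t ts)
  have [measurable]: "(\<lambda>u. pick p nx d ts (c + p t) u) \<in> borel \<rightarrow>\<^sub>M count_space UNIV"
    using Cons.IH .
  show ?case by simp
qed

lemma pick_sets[measurable]: "{u \<in> {a..<b}. pick p nx d ts c u = y} \<in> sets borel"
  by measurable

lemma sum_list_nonneg_real: "\<forall>t\<in>set ts. (p t::real) > 0 \<Longrightarrow> sum_list (map p ts) \<ge> 0"
  by (induction ts) auto

lemma pick_emeasure:
  assumes "\<forall>t\<in>set ts. p t > 0"
  shows "emeasure lborel {u \<in> {c..<c + sum_list (map p ts)}. pick p nx d ts c u = y}
        = ennreal (sum_list (map (\<lambda>t. if nx t = y then p t else 0) ts))"
using assms proof (induction ts arbitrary: c)
  case Nil then show ?case by simp
next
  case (Cons t ts)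
  let ?S = "sum_list (map p ts)"
  have pos: "p t > 0" and ps: "\<forall>t\<in>set ts. p t > 0" using Cons.prems by auto
  have S0: "?S \<ge> 0" using ps by (rule sum_list_nonneg_real)
  have R0: "sum_list (map (\<lambda>t. if nx t = y then p t else 0) ts) \<ge> 0"
    using ps by (induction ts) auto
  have eq: "{u \<in> {c..<c + sum_list (map p (t#ts))}. pick p nx d (t#ts) c u = y}
      = (if nx t = y then {c..<c+p t} else {}) \<union> {u \<in> {c + p t..<(c + p t) + ?S}. pick p nx d ts (c + p t) u = y}"
    using pos S0 by (auto simp: algebra_simps)
  have "emeasure lborel ((if nx t = y then {c..<c+p t} else {}) \<union> {u \<in> {c + p t..<(c + p t) + ?S}. pick p nx d ts (c + p t) u = y})
     = emeasure lborel (if nx t = y then {c..<c+p t} else {}) + emeasure lborel {u \<in> {c + p t..<(c + p t) + ?S}. pick p nx d ts (c + p t) u = y}"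
    by (rule plus_emeasure[symmetric]) auto
  also have "\<dots> = ennreal (if nx t = y then p t else 0) + ennreal (sum_list (map (\<lambda>t. if nx t = y then p t else 0) ts))"
    using Cons.IH[OF ps] pos by auto
  also have "\<dots> = ennreal (sum_list (map (\<lambda>t. if nx t = y then p t else 0) (t#ts)))"
    using R0 pos by (simp add: ennreal_plus)
  finally show ?case using eq by simp
qed

definition chs :: "('l,'v) cfg \<Rightarrow> ('l,'v) sched \<Rightarrow> ('l,'v) state list \<Rightarrow> real \<Rightarrow> ('l,'v) state" where
 "chs G s h u = (
    if kind G (fst (last h)) = NondetLoc then s h
    else if kind G (fst (last h)) = AssignLoc then next_state (hd (enabled_trans G (last h))) (last h)
    else pick (\<lambda>\<tau>. real_of_rat (prb \<tau> (snd (last h)))) (\<lambda>\<tau>. next_state \<tau> (last h)) (last h)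
               (enabled_trans G (last h)) 0 u)"

lemma chs_measurable[measurable]: "chs G s h \<in> borel \<rightarrow>\<^sub>M count_space UNIV"
  unfolding chs_def by measurable

definition U :: "real measure" where "U = uniform_measure lborel {0..<1}"

lemma sets_U[measurable_cong]: "sets U = sets borel"
  by (simp add: U_def)

lemma space_U: "space U = UNIV"
  by (simp add: U_def)

lemma prob_space_U: "prob_space U"
  unfolding U_def by (rule prob_space_uniform_measure) auto

lemma emeasure_U: "A \<in> sets borel \<Longrightarrow> emeasure U A = emeasure lborel ({0..<1} \<inter> A)"
proof -
  assume A: "A \<in> sets borel"
  have "emeasure lborel {0..<1::real} = 1" by simp
  then show ?thesis unfolding U_def using A by (subst emeasure_uniform_measure) (auto simp: divide_ennreal_def)
qed

lemma sum_list_of_rat: "real_of_rat (sum_list (map f xs)) = sum_list (map (\<lambda>x. real_of_rat (f x)) xs)"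
  by (induction xs) (auto simp: of_rat_add)

lemma assign_enabled:
  assumes wf: "wf_cfg G" and k: "kind G (fst \<sigma>) = AssignLoc"
  shows "\<exists>\<tau>. enabled_trans G \<sigma> = [\<tau>]"
proof -
  have ne: "enabled_trans G \<sigma> \<noteq> []" using wf by (cases \<sigma>) (auto simp: wf_cfg_def succs_def)
  have "enabled_trans G \<sigma> = filter (\<lambda>\<tau>. enabled \<tau> \<sigma>) (filter (\<lambda>\<tau>. src \<tau> = fst \<sigma>) (trans G))"
    by (auto simp: enabled_trans_def enabled_def filter_filter intro!: filter_cong)
  then have "length (enabled_trans G \<sigma>) \<le> length (filter (\<lambda>\<tau>. src \<tau> = fst \<sigma>) (trans G))"
    by (metis length_filter_le)
  also have "\<dots> \<le> 1" using wf k by (auto simp: wf_cfg_def)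
  finally show ?thesis using ne by (cases "enabled_trans G \<sigma>") auto
qed

lemma step_prob_nonneg:
  assumes wf: "wf_cfg G" shows "step_prob G s h y \<ge> 0"
proof -
  have W: "\<forall>\<sigma>. kind G (fst \<sigma>) = ProbLoc \<longrightarrow>
        (\<forall>\<tau>\<in>set (enabled_trans G \<sigma>). prb \<tau> (snd \<sigma>) > 0)" using wf unfolding wf_cfg_def by blast
  have "\<forall>\<tau>\<in>set (enabled_trans G (last h)). kind G (fst (last h)) = ProbLoc \<longrightarrow> prb \<tau> (snd (last h)) \<ge> 0"
    using W[rule_format, of "last h"] by (auto intro: less_imp_le)
  then show ?thesis
    by (auto simp: step_prob_def Let_def split: loc_kind.splits intro!: sum_list_nonneg)
qed

lemma emeasure_chs:
  assumes wf: "wf_cfg G"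
  shows "emeasure U {u. chs G s h u = y} = ennreal (step_prob G s h y)"
proof -
  have meas: "{u. chs G s h u = y} \<in> sets borel" by measurable
  have one: "emeasure lborel ({0..<1::real}) = 1" by simp
  consider (N) "kind G (fst (last h)) = NondetLoc" | (A) "kind G (fst (last h)) = AssignLoc"
    | (P) "kind G (fst (last h)) = ProbLoc" by (cases "kind G (fst (last h))") auto
  then show ?thesis
  proof cases
    case N
    then show ?thesis using meas by (auto simp: emeasure_U chs_def step_prob_def)
  next
    case A
    then obtain \<tau> where t: "enabled_trans G (last h) = [\<tau>]" using assign_enabled[OF wf] by blast
    have "succs G (last h) = {next_state \<tau> (last h)}" by (simp add: succs_def t)
    then show ?thesis using meas A t by (auto simp: emeasure_U chs_def step_prob_def)
  next
    case P
    let ?p = "\<lambda>\<tau>. real_of_rat (prb \<tau> (snd (last h)))"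
    let ?l = "enabled_trans G (last h)"
    have pos: "\<forall>t\<in>set ?l. ?p t > 0" and s1: "sum_list (map (\<lambda>\<tau>. prb \<tau> (snd (last h))) ?l) = 1"
    proof -
      have W: "\<forall>\<sigma>. kind G (fst \<sigma>) = ProbLoc \<longrightarrow>
        (\<forall>\<tau>\<in>set (enabled_trans G \<sigma>). prb \<tau> (snd \<sigma>) > 0) \<and>
        sum_list (map (\<lambda>\<tau>. prb \<tau> (snd \<sigma>)) (enabled_trans G \<sigma>)) = 1" using wf unfolding wf_cfg_def by blast
      show "\<forall>t\<in>set ?l. ?p t > 0" "sum_list (map (\<lambda>\<tau>. prb \<tau> (snd (last h))) ?l) = 1"
        using W[rule_format, of "last h"] P by auto
    qed
    have s1': "sum_list (map ?p ?l) = 1" using s1 sum_list_of_rat[of "\<lambda>\<tau>. prb \<tau> (snd (last h))" ?l]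
      by (simp add: o_def)
    have eqs: "{0..<1} \<inter> {u. chs G s h u = y} = {u \<in> {0..<0 + sum_list (map ?p ?l)}.
        pick ?p (\<lambda>\<tau>. next_state \<tau> (last h)) (last h) ?l 0 u = y}"
      using P s1' by (auto simp: chs_def)
    have "emeasure U {u. chs G s h u = y} = emeasure lborel ({0..<1} \<inter> {u. chs G s h u = y})"
      using meas by (rule emeasure_U)
    also have "\<dots> = ennreal (sum_list (map (\<lambda>t. if next_state t (last h) = y then ?p t else 0) ?l))"
      unfolding eqs by (rule pick_emeasure[OF pos])
    finally show ?thesis using P by (simp add: step_prob_def Let_def)
  qed
qed

primcorec procg :: "('l,'v) cfg \<Rightarrow> ('l,'v) sched \<Rightarrow> ('l,'v) state list \<Rightarrow> real stream \<Rightarrow> ('l,'v) state stream" where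
  "procg G s h \<omega> = last h ## procg G s (h @ [chs G s h (shd \<omega>)]) (stl \<omega>)"

lemma chs_measurable_U[measurable]: "chs G s h \<in> U \<rightarrow>\<^sub>M count_space UNIV"
  using chs_measurable measurable_cong_sets[OF sets_U refl] by blast

lemma procg_snth_measurable:
  "(\<lambda>\<omega>. procg G s h \<omega> !! n) \<in> stream_space U \<rightarrow>\<^sub>M count_space (UNIV :: ('l::finite,'v::finite) state set)"
proof (induction n arbitrary: h)
  case 0 show ?case by simp
next
  case (Suc n)
  have eq: "(\<lambda>\<omega>. procg G s h \<omega> !! Suc n) = (\<lambda>\<omega>. procg G s (h@[chs G s h (shd \<omega>)]) (stl \<omega>) !! n)"
    by simp
  show ?case unfolding eq
  proof (rule measurable_compose_countable'[where I=UNIV and f="\<lambda>c \<omega>. procg G s (h@[c]) (stl \<omega>) !! n" and g="\<lambda>\<omega>. chs G s h (shd \<omega>)"])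
    fix c show "(\<lambda>\<omega>. procg G s (h@[c]) (stl \<omega>) !! n) \<in> stream_space U \<rightarrow>\<^sub>M count_space UNIV"
      using measurable_compose[OF measurable_stl Suc.IH] by simp
  next
    show "(\<lambda>\<omega>. chs G s h (shd \<omega>)) \<in> stream_space U \<rightarrow>\<^sub>M count_space UNIV"
      using measurable_compose[OF measurable_shd chs_measurable_U] by simp
  qed simp
qed

lemma procg_measurable:
  "procg G s h \<in> stream_space U \<rightarrow>\<^sub>M stream_space (count_space (UNIV :: ('l::finite,'v::finite) state set))"
  by (rule measurable_stream_space2) (rule procg_snth_measurable)

lemma ppf_nonneg: "wf_cfg G \<Longrightarrow> path_prob_from G s h ys \<ge> 0"
  by (induction ys arbitrary: h) (auto intro!: mult_nonneg_nonneg step_prob_nonneg)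

lemma cyl_nonneg: "wf_cfg G \<Longrightarrow> cyl_prob G s x ys \<ge> 0"
  by (cases ys) (auto intro!: ppf_nonneg)

lemma prob_space_PS: "prob_space (stream_space U)"
  using prob_space.prob_space_stream_space[OF prob_space_U] .

lemma space_PS: "space (stream_space U) = UNIV"
  by (simp add: space_stream_space space_U)

lemma procg_sstart:
  fixes G :: "('l::finite, 'v::finite) cfg"
  assumes wf: "wf_cfg G"
  shows "emeasure (stream_space U) {\<omega> \<in> space (stream_space U). procg G s h \<omega> \<in> sstart UNIV (last h # ys)}
         = ennreal (path_prob_from G s h ys)"
proof (induction ys arbitrary: h)
  case Nil
  have "{\<omega> \<in> space (stream_space U). procg G s h \<omega> \<in> sstart UNIV [last h]} = space (stream_space U)"
    by (auto simp: space_PS)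
  then show ?case using prob_space.emeasure_space_1[OF prob_space_PS] by simp
next
  case (Cons y ys)
  let ?X = "{\<omega> \<in> space (stream_space U). procg G s h \<omega> \<in> sstart UNIV (last h # y # ys)}"
  have Xs: "?X \<in> sets (stream_space U)"
  proof -
    have "?X = procg G s h -` sstart UNIV (last h # y # ys) \<inter> space (stream_space U)" by auto
    also have "\<dots> \<in> sets (stream_space U)"
      by (rule measurable_sets[OF procg_measurable sstart_sets])
    finally show ?thesis .
  qed
  have sl: "\<And>t. {x \<in> space (stream_space U). t ## x \<in> ?X} =
     (if chs G s h t = y then {x \<in> space (stream_space U). procg G s (h@[y]) x \<in> sstart UNIV (last (h@[y]) # ys)} else {})"
    by (auto simp: space_PS procg.code[of G s h "_ ## _"])
  have "emeasure (stream_space U) ?X = (\<integral>\<^sup>+t. emeasure (stream_space U) {x \<in> space (stream_space U). t ## x \<in> ?X} \<partial>U)"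
    by (rule prob_space.emeasure_stream_space[OF prob_space_U Xs])
  also have "\<dots> = (\<integral>\<^sup>+t. ennreal (path_prob_from G s (h@[y]) ys) * indicator {t. chs G s h t = y} t \<partial>U)"
  proof (rule nn_integral_cong)
    fix t
    show "emeasure (stream_space U) {x \<in> space (stream_space U). t ## x \<in> ?X} =
       ennreal (path_prob_from G s (h@[y]) ys) * indicator {t. chs G s h t = y} t"
      unfolding sl using Cons.IH[of "h@[y]"] by (cases "chs G s h t = y") auto
  qed
  also have "\<dots> = ennreal (path_prob_from G s (h@[y]) ys) * emeasure U {t. chs G s h t = y}"
  proof (rule nn_integral_cmult_indicator)
    show "{t. chs G s h t = y} \<in> sets U" by measurable
  qed
  also have "\<dots> = ennreal (path_prob_from G s h (y # ys))"
    using emeasure_chs[OF wf] ppf_nonneg[OF wf] step_prob_nonneg[OF wf]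
    by (simp add: ennreal_mult' mult.commute)
  finally show ?case .
qed

lemma run_measure_ex:
  fixes G :: "('l::finite, 'v::finite) cfg"
  assumes wf: "wf_cfg G"
  shows "\<exists>M. prob_space M \<and> sets M = sets (stream_space (count_space UNIV)) \<and>
        (\<forall>xs. emeasure M (sstart UNIV xs) = ennreal (cyl_prob G s \<sigma>0 xs))"
proof (intro exI conjI allI)
  let ?M = "distr (stream_space U) (stream_space (count_space UNIV)) (procg G s [\<sigma>0])"
  show "prob_space ?M"
    by (rule prob_space.prob_space_distr[OF prob_space_PS procg_measurable])
  show "sets ?M = sets (stream_space (count_space UNIV))" by simp
  fix xs
  have "emeasure ?M (sstart UNIV xs) = emeasure (stream_space U) (procg G s [\<sigma>0] -` sstart UNIV xs \<inter> space (stream_space U))"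
    by (rule emeasure_distr[OF procg_measurable sstart_sets])
  also have "\<dots> = ennreal (cyl_prob G s \<sigma>0 xs)"
  proof (cases xs)
    case Nil
    then show ?thesis using prob_space.emeasure_space_1[OF prob_space_PS] by (simp add: space_PS)
  next
    case (Cons y ys)
    show ?thesis
    proof (cases "y = \<sigma>0")
      case True
      have "procg G s [\<sigma>0] -` sstart UNIV xs \<inter> space (stream_space U) =
        {\<omega> \<in> space (stream_space U). procg G s [\<sigma>0] \<omega> \<in> sstart UNIV (last [\<sigma>0] # ys)}"
        using Cons True by auto
      then show ?thesis using procg_sstart[OF wf, of s "[\<sigma>0]" ys] Cons True by simp
    next
      case False
      have "procg G s [\<sigma>0] -` sstart UNIV xs \<inter> space (stream_space U) = {}"
        using Cons False by auto
      then show ?thesis using Cons False by simp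
    qed
  qed
  finally show "emeasure ?M (sstart UNIV xs) = ennreal (cyl_prob G s \<sigma>0 xs)" .
qed

lemma run_measure_props:
  fixes G :: "('l::finite, 'v::finite) cfg"
  assumes wf: "wf_cfg G"
  shows "prob_space (run_measure G s x) \<and> sets (run_measure G s x) = sets (stream_space (count_space UNIV)) \<and>
        (\<forall>xs. emeasure (run_measure G s x) (sstart UNIV xs) = ennreal (cyl_prob G s x xs))"
  unfolding run_measure_def by (rule someI_ex[OF run_measure_ex[OF wf]])


fun chain :: "('l,'v) cfg \<Rightarrow> ('l,'v) state \<Rightarrow> ('l,'v) state list \<Rightarrow> bool" where
  "chain G a [] = True"
| "chain G a (b # bs) = (b \<in> succs G a \<and> chain G b bs)"

lemma chain_append: "chain G a (xs @ ys) \<longleftrightarrow> chain G a xs \<and> chain G (last (a # xs)) ys"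
  by (induction xs arbitrary: a) auto

lemma chain_nth: "chain G a ys \<Longrightarrow> i < length ys \<Longrightarrow> ys ! i \<in> succs G ((a # ys) ! i)"
  by (induction ys arbitrary: a i) (auto simp: nth_Cons split: nat.splits)

definition Good :: "('l,'v) cfg \<Rightarrow> ('l,'v) state \<Rightarrow> nat \<Rightarrow> ('l,'v) state list set" where
  "Good G x n = {xs. length xs = n \<and> (\<exists>ys. xs = x # ys \<and> chain G x ys)}"

lemma finite_succs: "finite (succs G a)"
  by (simp add: succs_def)

lemma finite_chains: "finite {ys. length ys = n \<and> chain G a ys}"
proof (induction n arbitrary: a)
  case 0 then show ?case by simp
next
  case (Suc n)
  have "{ys. length ys = Suc n \<and> chain G a ys} \<subseteq> (\<Union>b\<in>succs G a. (\<lambda>ys. b # ys) ` {ys. length ys = n \<and> chain G b ys})"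
    by (auto simp: length_Suc_conv)
  moreover have "finite (\<Union>b\<in>succs G a. (\<lambda>ys. b # ys) ` {ys. length ys = n \<and> chain G b ys})"
    using Suc finite_succs by blast
  ultimately show ?case by (rule finite_subset)
qed

lemma finite_Good: "finite (Good G x n)"
proof -
  have "Good G x n \<subseteq> (\<lambda>ys. x # ys) ` {ys. length ys = n - 1 \<and> chain G x ys}"
    by (auto simp: Good_def)
  then show ?thesis using finite_chains finite_subset by blast
qed

lemma sum_list_if_zero: "\<forall>t\<in>set l. nx t \<noteq> y \<Longrightarrow> sum_list (map (\<lambda>t. if nx t = y then (f t::real) else 0) l) = 0"
  by (induction l) auto

lemma step_prob_zero:
  assumes v: "valid_sched G s" and h: "h \<noteq> []" and y: "y \<notin> succs G (last h)"
  shows "step_prob G s h y = 0"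
proof -
  have "\<forall>\<tau>\<in>set (enabled_trans G (last h)). next_state \<tau> (last h) \<noteq> y"
    using y by (auto simp: succs_def)
  then have "sum_list (map (\<lambda>\<tau>. if next_state \<tau> (last h) = y then real_of_rat (prb \<tau> (snd (last h))) else 0)
      (enabled_trans G (last h))) = 0"
    by (rule sum_list_if_zero)
  moreover have "kind G (fst (last h)) = NondetLoc \<Longrightarrow> s h \<noteq> y"
    using v h y by (auto simp: valid_sched_def)
  ultimately show ?thesis using y by (auto simp: step_prob_def Let_def split: loc_kind.splits)
qed

lemma ppf_zero:
  "valid_sched G s \<Longrightarrow> h \<noteq> [] \<Longrightarrow> \<not> chain G (last h) ys \<Longrightarrow> path_prob_from G s h ys = 0"
  by (induction ys arbitrary: h) (auto simp: step_prob_zero)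

lemma cyl_zero:
  assumes v: "valid_sched G s" and "length xs = n" "xs \<notin> Good G x n" "n > 0"
  shows "cyl_prob G s x xs = 0"
  using assms ppf_zero[OF v] by (cases xs) (auto simp: Good_def)

lemma sstart_stake: "\<omega> \<in> sstart UNIV xs \<longleftrightarrow> stake (length xs) \<omega> = xs"
  by (induction xs arbitrary: \<omega>) (auto simp: stream_eq_Stream_iff)

lemma stake_sets: "{\<omega>. stake n \<omega> \<in> A} \<in> sets (stream_space (count_space (UNIV :: 'a::countable set)))"
proof -
  have "{\<omega>. stake n \<omega> \<in> A} = stake n -` A \<inter> space (stream_space (count_space (UNIV :: 'a set)))"
    by (auto simp: space_stream_space)
  also have "\<dots> \<in> sets (stream_space (count_space (UNIV :: 'a set)))"
    by (rule measurable_sets[OF measurable_stake]) simp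
  finally show ?thesis .
qed

lemma meas_stake:
  fixes G :: "('l::finite, 'v::finite) cfg"
  assumes wf: "wf_cfg G" and v: "valid_sched G s" and n: "n > 0"
  shows "measure (run_measure G s x) {\<omega>. stake n \<omega> \<in> A} = (\<Sum>xs\<in>Good G x n \<inter> A. cyl_prob G s x xs)"
proof -
  let ?M = "run_measure G s x"
  have P: "prob_space ?M" and S: "sets ?M = sets (stream_space (count_space UNIV))"
    and E: "\<And>xs. emeasure ?M (sstart UNIV xs) = ennreal (cyl_prob G s x xs)"
    using run_measure_props[OF wf] by auto
  have sst: "\<And>xs. sstart UNIV xs \<in> sets ?M" using S sstart_sets by auto
  let ?B1 = "Good G x n \<inter> A" and ?B2 = "{xs. length xs = n} \<inter> A - Good G x n"
  have eq: "{\<omega>. stake n \<omega> \<in> A} = (\<Union>xs\<in>?B1. sstart UNIV xs) \<union> (\<Union>xs\<in>?B2. sstart UNIV xs)"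
    by (auto simp: sstart_stake Good_def)
  have null: "(\<Union>xs\<in>?B2. sstart UNIV xs) \<in> null_sets ?M"
  proof (rule null_sets_UN')
    show "countable ?B2" by (rule countableI_type)
    fix xs assume "xs \<in> ?B2"
    then have "cyl_prob G s x xs = 0" using cyl_zero[OF v _ _ n] by auto
    then show "sstart UNIV xs \<in> null_sets ?M" using E[of xs] sst[of xs] by auto
  qed
  have fin: "finite ?B1" using finite_Good by blast
  have U1: "(\<Union>xs\<in>?B1. sstart UNIV xs) \<in> sets ?M"
    using fin sst by blast
  have disj: "disjoint_family_on (\<lambda>xs. sstart UNIV xs) ?B1"
  proof (unfold disjoint_family_on_def, intro ballI impI)
    fix a b assume a: "a \<in> ?B1" and b: "b \<in> ?B1" and ab: "a \<noteq> b"
    have la: "length a = n" and lb: "length b = n" using a b by (auto simp: Good_def)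
    show "sstart UNIV a \<inter> sstart UNIV b = {}"
    proof (rule ccontr)
      assume "sstart UNIV a \<inter> sstart UNIV b \<noteq> {}"
      then obtain \<omega> where "\<omega> \<in> sstart UNIV a" "\<omega> \<in> sstart UNIV b" by blast
      then have "stake n \<omega> = a" "stake n \<omega> = b" using la lb by (simp_all only: sstart_stake)
      then show False using ab by simp
    qed
  qed
  have "emeasure ?M {\<omega>. stake n \<omega> \<in> A} = emeasure ?M (\<Union>xs\<in>?B1. sstart UNIV xs)"
    unfolding eq by (rule emeasure_Un_null_set[OF U1 null])
  also have "\<dots> = (\<Sum>xs\<in>?B1. emeasure ?M (sstart UNIV xs))"
  proof (rule sum_emeasure[symmetric])
    show "sstart UNIV ` ?B1 \<subseteq> sets ?M" using sst by blast
  qed (rule disj, rule fin)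
  also have "\<dots> = (\<Sum>xs\<in>?B1. ennreal (cyl_prob G s x xs))"
    by (rule sum.cong[OF refl]) (rule E)
  also have "\<dots> = ennreal (\<Sum>xs\<in>?B1. cyl_prob G s x xs)"
    by (rule sum_ennreal) (rule cyl_nonneg[OF wf])
  finally have "emeasure ?M {\<omega>. stake n \<omega> \<in> A} = ennreal (\<Sum>xs\<in>?B1. cyl_prob G s x xs)" .
  moreover have "(\<Sum>xs\<in>?B1. cyl_prob G s x xs) \<ge> 0"
    by (rule sum_nonneg) (rule cyl_nonneg[OF wf])
  ultimately show ?thesis by (simp add: measure_def)
qed

lemma step_prob_cong:
  "(kind G (fst (last h)) = NondetLoc \<longrightarrow> s h = s' h) \<Longrightarrow> step_prob G s h y = step_prob G s' h y"
  by (auto simp: step_prob_def Let_def split: loc_kind.splits)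

lemma ppf_cong:
  "(\<forall>k<length ys. kind G (fst (last (h @ take k ys))) = NondetLoc \<longrightarrow> s (h @ take k ys) = s' (h @ take k ys))
   \<Longrightarrow> path_prob_from G s h ys = path_prob_from G s' h ys"
proof (induction ys arbitrary: h)
  case Nil then show ?case by simp
next
  case (Cons y ys)
  have "step_prob G s h y = step_prob G s' h y"
    using Cons.prems[rule_format, of 0] by (intro step_prob_cong) simp
  moreover have "path_prob_from G s (h @ [y]) ys = path_prob_from G s' (h @ [y]) ys"
  proof (rule Cons.IH, intro allI impI)
    fix k assume "k < length ys" "kind G (fst (last ((h @ [y]) @ take k ys))) = NondetLoc"
    then show "s ((h @ [y]) @ take k ys) = s' ((h @ [y]) @ take k ys)"
      using Cons.prems[rule_format, of "Suc k"] by simp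
  qed
  ultimately show ?case by simp
qed

lemma ppf_append: "path_prob_from G s h (ys @ zs) = path_prob_from G s h ys * path_prob_from G s (h @ ys) zs"
  by (induction ys arbitrary: h) auto

lemma ppf_shift:
  assumes "\<forall>h'. h' \<noteq> [] \<longrightarrow> s' (pre @ h') = s2 h'"
  shows "h \<noteq> [] \<Longrightarrow> path_prob_from G s' (pre @ h) ys = path_prob_from G s2 h ys"
proof (induction ys arbitrary: h)
  case Nil then show ?case by simp
next
  case (Cons y ys)
  have "step_prob G s' (pre @ h) y = step_prob G s2 h y"
    using assms Cons.prems by (auto simp: step_prob_def Let_def split: loc_kind.splits)
  moreover have "path_prob_from G s' (pre @ h @ [y]) ys = path_prob_from G s2 (h @ [y]) ys"
    using Cons.IH[of "h @ [y]"] by simp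
  ultimately show ?case by simp
qed

lemma sum_list_pos: "\<forall>t\<in>set l. (f t::real) \<ge> 0 \<Longrightarrow> \<exists>t\<in>set l. f t > 0 \<Longrightarrow> sum_list (map f l) > 0"
proof (induction l)
  case Nil then show ?case by simp
next
  case (Cons a l)
  have "sum_list (map f l) \<ge> 0" using Cons.prems(1) by (auto intro!: sum_list_nonneg)
  then show ?case using Cons by (cases "f a > 0") auto
qed

lemma step_prob_pos:
  assumes wf: "wf_cfg G" and y: "y \<in> succs G (last h)"
    and nd: "kind G (fst (last h)) = NondetLoc \<longrightarrow> s h = y"
  shows "step_prob G s h y > 0"
proof -
  have W: "\<forall>\<sigma>. kind G (fst \<sigma>) = ProbLoc \<longrightarrow>
        (\<forall>\<tau>\<in>set (enabled_trans G \<sigma>). prb \<tau> (snd \<sigma>) > 0)" using wf unfolding wf_cfg_def by blast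
  obtain \<tau> where t: "\<tau> \<in> set (enabled_trans G (last h))" "next_state \<tau> (last h) = y"
    using y by (auto simp: succs_def)
  show ?thesis
  proof (cases "kind G (fst (last h))")
    case ProbLoc
    have "sum_list (map (\<lambda>\<tau>. if next_state \<tau> (last h) = y then real_of_rat (prb \<tau> (snd (last h))) else 0)
      (enabled_trans G (last h))) > 0"
      using W[rule_format, OF ProbLoc] t by (intro sum_list_pos) (auto intro: less_imp_le)
    then show ?thesis using ProbLoc by (simp add: step_prob_def Let_def)
  qed (use nd y in \<open>auto simp: step_prob_def Let_def\<close>)
qed

lemma ppf_pos:
  assumes wf: "wf_cfg G"
  shows "h \<noteq> [] \<Longrightarrow> chain G (last h) ys \<Longrightarrow>
    (\<forall>k<length ys. kind G (fst (last (h @ take k ys))) = NondetLoc \<longrightarrow> s (h @ take k ys) = ys ! k) \<Longrightarrow>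
    path_prob_from G s h ys > 0"
proof (induction ys arbitrary: h)
  case Nil then show ?case by simp
next
  case (Cons y ys)
  have "step_prob G s h y > 0"
    using Cons.prems Cons.prems(3)[rule_format, of 0] by (intro step_prob_pos[OF wf]) auto
  moreover have "path_prob_from G s (h @ [y]) ys > 0"
  proof (rule Cons.IH)
    show "chain G (last (h @ [y])) ys" using Cons.prems by simp
    show "\<forall>k<length ys. kind G (fst (last ((h @ [y]) @ take k ys))) = NondetLoc \<longrightarrow> s ((h @ [y]) @ take k ys) = ys ! k"
    proof (intro allI impI)
      fix k assume k: "k < length ys" and kn: "kind G (fst (last ((h @ [y]) @ take k ys))) = NondetLoc"
      have e: "(h @ [y]) @ take k ys = h @ take (Suc k) (y # ys)" by simp
      show "s ((h @ [y]) @ take k ys) = ys ! k"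
        using Cons.prems(3)[rule_format, of "Suc k"] k kn unfolding e by simp
    qed
  qed simp
  ultimately show ?case by simp
qed

lemma absorb1:
  fixes T :: "('l,'v) state"
  assumes ab: "succs G T = {T}"
  shows "chain G T ws \<Longrightarrow> set ws \<subseteq> {T}"
proof (induction ws)
  case Nil then show ?case by simp
next
  case (Cons b ws)
  then have "b = T" using ab by auto
  then show ?case using Cons by auto
qed

lemma absorb: "succs G T = {T} \<Longrightarrow> chain G a (zs @ ws) \<Longrightarrow> T \<in> set (a # zs) \<Longrightarrow> set ws \<subseteq> {T}"
proof (induction zs arbitrary: a)
  case Nil
  then have "chain G T ws" by simp
  then show ?case by (rule absorb1[OF Nil.prems(1)])
next
  case (Cons z zs)
  have c: "z \<in> succs G a" "chain G z (zs @ ws)" using Cons.prems by auto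
  have "T \<in> set (z # zs)" using Cons.prems(1,3) c(1) by auto
  then show ?case using Cons.IH[OF Cons.prems(1) c(2)] by simp
qed

lemma reach_chain:
  "(a, b) \<in> {(a, b). b \<in> succs G a}\<^sup>* \<Longrightarrow> \<exists>ys. chain G a ys \<and> last (a # ys) = b"
proof (induction rule: rtrancl_induct)
  case base then show ?case by (intro exI[of _ "[]"]) simp
next
  case (step b c)
  then obtain ys where "chain G a ys" "last (a # ys) = b" by blast
  then show ?case using step by (intro exI[of _ "ys @ [c]"]) (simp add: chain_append)
qed

lemma chain_Reach: "a \<in> Reach G \<Longrightarrow> chain G a ys \<Longrightarrow> set ys \<subseteq> Reach G"
proof (induction ys arbitrary: a)
  case (Cons b ys)
  then have "b \<in> Reach G" by (auto simp: Reach_def intro: rtrancl_into_rtrancl)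
  then show ?case using Cons by auto
qed simp

definition fsum :: "('l,'v) cfg \<Rightarrow> ('l,'v) sched \<Rightarrow> ('l,'v) state \<Rightarrow> nat \<Rightarrow> real" where
  "fsum G s x L = (\<Sum>xs\<in>{xs\<in>Good G x L. term_state G \<notin> set xs}. cyl_prob G s x xs)"

definition Ev :: "('l,'v) cfg \<Rightarrow> nat \<Rightarrow> ('l,'v) state stream set" where
  "Ev G L = {\<omega>. term_state G \<notin> set (stake L \<omega>)}"

lemma fsum_meas:
  fixes G :: "('l::finite, 'v::finite) cfg"
  assumes wf: "wf_cfg G" and v: "valid_sched G s" and n: "L > 0"
  shows "measure (run_measure G s x) (Ev G L) = fsum G s x L"
proof -
  have "Ev G L = {\<omega>. stake L \<omega> \<in> {xs. term_state G \<notin> set xs}}" by (simp add: Ev_def)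
  moreover have "Good G x L \<inter> {xs. term_state G \<notin> set xs} = {xs\<in>Good G x L. term_state G \<notin> set xs}" by blast
  ultimately show ?thesis using meas_stake[OF wf v n, of x "{xs. term_state G \<notin> set xs}"]
    by (simp add: fsum_def)
qed

lemma Ev_sets: "Ev G L \<in> sets (run_measure G s x)" if "wf_cfg (G :: ('l::finite, 'v::finite) cfg)"
proof -
  have "Ev G L = {\<omega>. stake L \<omega> \<in> {xs. term_state G \<notin> set xs}}" by (simp add: Ev_def)
  then show ?thesis using run_measure_props[OF that] stake_sets[of L "{xs. term_state G \<notin> set xs}"] by simp
qed

lemma fsum_mono:
  fixes G :: "('l::finite, 'v::finite) cfg"
  assumes wf: "wf_cfg G" and v: "valid_sched G s" and Lm: "L \<le> m"
  shows "fsum G s x (Suc m) \<le> fsum G s x (Suc L)"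
proof -
  interpret P: prob_space "run_measure G s x" using run_measure_props[OF wf] by blast
  have "Ev G (Suc m) \<subseteq> Ev G (Suc L)"
  proof
    fix \<omega> assume "\<omega> \<in> Ev G (Suc m)"
    moreover have "set (stake (Suc L) \<omega>) \<subseteq> set (stake (Suc m) \<omega>)"
    proof -
      have "stake (Suc L) \<omega> = take (Suc L) (stake (Suc m) \<omega>)" using Lm by (simp add: take_stake)
      then show ?thesis by (metis set_take_subset)
    qed
    ultimately show "\<omega> \<in> Ev G (Suc L)" by (auto simp: Ev_def)
  qed
  then have "measure (run_measure G s x) (Ev G (Suc m)) \<le> measure (run_measure G s x) (Ev G (Suc L))"
    by (intro P.finite_measure_mono Ev_sets[OF wf])
  then show ?thesis using fsum_meas[OF wf v] by simp
qed


lemma succs_ne: "wf_cfg G \<Longrightarrow> succs G \<sigma> \<noteq> {}"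
  unfolding wf_cfg_def by blast

lemma last_take_P: "0 < l \<Longrightarrow> l \<le> length P \<Longrightarrow> last (take l P) = P ! (l - 1)"
proof -
  assume a: "0 < l" "l \<le> length P"
  then have ne: "take l P \<noteq> []" by (cases P) auto
  have "last (take l P) = take l P ! (length (take l P) - 1)" by (rule last_conv_nth[OF ne])
  also have "\<dots> = P ! (l - 1)" using a by (simp add: min_def)
  finally show ?thesis .
qed

lemma compose_bound:
  fixes G :: "('l::finite, 'v::finite) cfg"
  assumes wf: "wf_cfg G" and ab: "succs G (term_state G) = {term_state G}"
    and v2: "valid_sched G s2" and ch: "chain G i0 ys" and lx: "last (i0 # ys) = x"
    and xT: "x \<noteq> term_state G"
  shows "\<exists>s' p. valid_sched G s' \<and> p > 0 \<and>
           (\<forall>L. fsum G s' i0 (length ys + Suc L) \<ge> p * fsum G s2 x (Suc L))"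
proof -
  define m where "m = length ys"
  define P where "P = i0 # ys"
  define pre where "pre = butlast P"
  define d where "d = (\<lambda>h. SOME y. y \<in> succs G (last h))"
  define s' where "s' = (\<lambda>h. if m < length h \<and> take m h = pre then s2 (drop m h)
        else if h \<noteq> [] \<and> length h \<le> m \<and> h = take (length h) P then P ! length h else d h)"
  have lenpre: "length pre = m" by (simp add: pre_def P_def m_def)
  have Px: "pre @ [x] = P"
  proof (cases "ys = []")
    case True then show ?thesis using lx by (simp add: pre_def P_def)
  next
    case False then show ?thesis using lx by (simp add: pre_def P_def) (metis append_butlast_last_id)
  qed
  have dsucc: "\<And>h. d h \<in> succs G (last h)"
  proof -
    fix h
    have "succs G (last h) \<noteq> {}" using wf by (rule succs_ne)
    then show "d h \<in> succs G (last h)" unfolding d_def by (simp add: some_in_eq)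
  qed
  have valid: "valid_sched G s'"
    unfolding valid_sched_def
  proof (intro allI impI)
    fix h :: "('l,'v) state list" assume h: "h \<noteq> [] \<and> kind G (fst (last h)) = NondetLoc"
    show "s' h \<in> succs G (last h)"
    proof (cases "m < length h \<and> take m h = pre")
      case True
      then have ne: "drop m h \<noteq> []" and ld: "last (drop m h) = last h" by (auto simp: last_drop)
      have "s2 (drop m h) \<in> succs G (last (drop m h))"
        using v2 ne h ld unfolding valid_sched_def by metis
      then show ?thesis using True ld unfolding s'_def by simp
    next
      case F1: False
      show ?thesis
      proof (cases "h \<noteq> [] \<and> length h \<le> m \<and> h = take (length h) P")
        case True
        define l where "l = length h"
        have l1: "0 < l" "l \<le> m" using True h by (auto simp: l_def)
        have "ys ! (l - 1) \<in> succs G ((i0 # ys) ! (l - 1))"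
          using chain_nth[OF ch, of "l-1"] l1 m_def by simp
        moreover have "P ! l = ys ! (l-1)" using l1 by (simp add: P_def nth_Cons')
        moreover have "last h = P ! (l - 1)"
        proof -
          have "h = take l P" using True l_def by simp
          then show ?thesis using l1 last_take_P[of l P] by (simp add: P_def m_def)
        qed
        ultimately show ?thesis using F1 True unfolding s'_def l_def P_def by auto
      next
        case False then show ?thesis using F1 dsucc unfolding s'_def by auto
      qed
    qed
  qed
  define p where "p = path_prob_from G s' [i0] ys"
  have ppos: "p > 0" unfolding p_def
  proof (rule ppf_pos[OF wf])
    show "[i0] \<noteq> []" by simp
    show "chain G (last [i0]) ys" using ch by simp
    show "\<forall>k<length ys. kind G (fst (last ([i0] @ take k ys))) = NondetLoc \<longrightarrow> s' ([i0] @ take k ys) = ys ! k"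
    proof (intro allI impI)
      fix k assume k: "k < length ys"
      have tk: "[i0] @ take k ys = take (Suc k) P" by (simp add: P_def)
      have "s' ([i0] @ take k ys) = P ! Suc k"
        unfolding s'_def using k by (auto simp: m_def P_def)
      then show "s' ([i0] @ take k ys) = ys ! k" by (simp add: P_def)
    qed
  qed
  have shift: "\<forall>h'. h' \<noteq> [] \<longrightarrow> s' (pre @ h') = s2 h'"
    using lenpre unfolding s'_def by auto
  have Tpre: "term_state G \<notin> set pre"
  proof (cases "ys = []")
    case True then show ?thesis by (simp add: pre_def P_def)
  next
    case False
    then have ys: "ys = butlast ys @ [x]" using lx by simp (metis append_butlast_last_id)
    have pre: "pre = i0 # butlast ys" using False by (simp add: pre_def P_def)
    show ?thesis
    proof
      assume "term_state G \<in> set pre"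
      then have "term_state G \<in> set (i0 # butlast ys)" by (simp add: pre)
      moreover have "chain G i0 (butlast ys @ [x])" using ch ys by simp
      ultimately have "set [x] \<subseteq> {term_state G}" using absorb[OF ab] by blast
      then show False using xT by simp
    qed
  qed
  have bound: "fsum G s' i0 (length ys + Suc L) \<ge> p * fsum G s2 x (Suc L)" for L
  proof -
    let ?W = "{ws \<in> Good G x (Suc L). term_state G \<notin> set ws}"
    let ?Z = "{xs \<in> Good G i0 (length ys + Suc L). term_state G \<notin> set xs}"
    have cyl_eq: "cyl_prob G s' i0 (pre @ ws) = p * cyl_prob G s2 x ws" if w: "ws \<in> ?W" for ws
    proof -
      obtain ws' where ws: "ws = x # ws'" using w by (auto simp: Good_def)
      have e: "pre @ ws = i0 # (ys @ ws')" using Px ws by (simp add: P_def flip: append_assoc)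
      have "cyl_prob G s' i0 (pre @ ws) = path_prob_from G s' [i0] ys * path_prob_from G s' ([i0] @ ys) ws'"
        unfolding e by (simp add: ppf_append)
      also have "[i0] @ ys = pre @ [x]" using Px by (simp add: P_def)
      also have "path_prob_from G s' (pre @ [x]) ws' = path_prob_from G s2 [x] ws'"
        by (rule ppf_shift[OF shift]) simp
      finally show ?thesis by (simp add: p_def ws)
    qed
    have sub: "(\<lambda>ws. pre @ ws) ` ?W \<subseteq> ?Z"
    proof
      fix zs assume "zs \<in> (\<lambda>ws. pre @ ws) ` ?W"
      then obtain ws where w: "ws \<in> ?W" and zs: "zs = pre @ ws" by blast
      obtain ws' where ws: "ws = x # ws'" and cw: "chain G x ws'" and lw: "length ws = Suc L"
        using w by (auto simp: Good_def)
      have e: "zs = i0 # (ys @ ws')" using Px ws zs by (simp add: P_def flip: append_assoc)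
      have "chain G i0 (ys @ ws')" using ch cw lx by (simp add: chain_append)
      moreover have "length zs = length ys + Suc L" using zs lenpre lw by (simp add: m_def)
      moreover have "term_state G \<notin> set zs" using zs Tpre w by auto
      ultimately show "zs \<in> ?Z" using e by (auto simp: Good_def)
    qed
    have inj: "inj_on (\<lambda>ws. pre @ ws) ?W" by (auto simp: inj_on_def)
    have "p * fsum G s2 x (Suc L) = (\<Sum>ws\<in>?W. p * cyl_prob G s2 x ws)"
      by (simp add: fsum_def sum_distrib_left)
    also have "\<dots> = (\<Sum>ws\<in>?W. cyl_prob G s' i0 (pre @ ws))"
      using cyl_eq by simp
    also have "\<dots> = (\<Sum>zs\<in>(\<lambda>ws. pre @ ws) ` ?W. cyl_prob G s' i0 zs)"
      by (simp add: sum.reindex[OF inj])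
    also have "\<dots> \<le> (\<Sum>zs\<in>?Z. cyl_prob G s' i0 zs)"
    proof (rule sum_mono2)
      show "finite ?Z" using finite_Good[of G i0 "length ys + Suc L"] by simp
    qed (use sub cyl_nonneg[OF wf] in auto)
    also have "\<dots> = fsum G s' i0 (length ys + Suc L)" by (simp add: fsum_def)
    finally show ?thesis .
  qed
  show ?thesis using valid ppos bound by blast
qed


lemma set_stake_iff: "z \<in> set (stake n \<omega>) \<longleftrightarrow> (\<exists>k<n. \<omega> !! k = z)"
  by (auto simp: in_set_conv_nth)

lemma Ev_mono: "L \<le> m \<Longrightarrow> Ev G m \<subseteq> Ev G L"
proof
  fix \<omega> assume Lm: "L \<le> m" and "\<omega> \<in> Ev G m"
  then show "\<omega> \<in> Ev G L" by (auto simp: Ev_def set_stake_iff)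
qed

lemma space_run:
  fixes G :: "('l::finite, 'v::finite) cfg"
  assumes wf: "wf_cfg G"
  shows "space (run_measure G s x) = UNIV"
proof -
  have "sets (run_measure G s x) = sets (stream_space (count_space UNIV))" using run_measure_props[OF wf] by blast
  then have "space (run_measure G s x) = space (stream_space (count_space (UNIV :: ('l,'v) state set)))"
    by (rule sets_eq_imp_space_eq)
  then show ?thesis by (simp add: space_stream_space)
qed

lemma cyl_cong:
  assumes "\<forall>h. h \<noteq> [] \<longrightarrow> kind G (fst (last h)) = NondetLoc \<longrightarrow> s1 h = s2 h"
  shows "cyl_prob G s1 x xs = cyl_prob G s2 x xs"
proof (cases xs)
  case (Cons y ys)
  have "path_prob_from G s1 [y] ys = path_prob_from G s2 [y] ys"
    using assms by (intro ppf_cong) auto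
  then show ?thesis using Cons by simp
qed simp

lemma uniform:
  fixes G :: "('l::finite, 'v::finite) cfg"
  assumes wf: "wf_cfg G" and ab: "succs G (term_state G) = {term_state G}"
    and ast: "AST G" and xR: "x \<in> Reach G" and eps: "\<epsilon> > 0"
  shows "\<exists>L. \<forall>s. valid_sched G s \<longrightarrow> fsum G s x (Suc L) \<le> \<epsilon>"
proof (rule ccontr)
  assume "\<not> ?thesis"
  then have "\<forall>L. \<exists>s. valid_sched G s \<and> fsum G s x (Suc L) > \<epsilon>" by (auto simp: not_le)
  then obtain sq where sq: "\<And>L. valid_sched G (sq L) \<and> fsum G (sq L) x (Suc L) > \<epsilon>" by metis
  define d where "d = (\<lambda>h::('l,'v) state list. SOME y. y \<in> succs G (last h))"
  have dsucc: "\<And>h. d h \<in> succs G (last h)"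
  proof -
    fix h :: "('l,'v) state list"
    have "succs G (last h) \<noteq> {}" using wf by (rule succs_ne)
    then show "d h \<in> succs G (last h)" unfolding d_def by (simp add: some_in_eq)
  qed
  define sq' where "sq' = (\<lambda>L h. if h \<noteq> [] \<and> kind G (fst (last h)) = NondetLoc then sq L h else d h)"
  have v': "\<And>L. valid_sched G (sq' L)"
    using sq dsucc by (auto simp: valid_sched_def sq'_def)
  have f': "\<And>L. fsum G (sq' L) x (Suc L) > \<epsilon>"
  proof -
    fix L
    have "fsum G (sq' L) x (Suc L) = fsum G (sq L) x (Suc L)"
      unfolding fsum_def by (rule sum.cong[OF refl], rule cyl_cong) (auto simp: sq'_def)
    then show "fsum G (sq' L) x (Suc L) > \<epsilon>" using sq by simp
  qed
  define V where "V = (\<lambda>j. if (from_nat j :: ('l,'v) state list) \<noteq> [] \<and> kind G (fst (last (from_nat j :: ('l,'v) state list))) = NondetLoc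
      then succs G (last (from_nat j :: ('l,'v) state list)) else {d (from_nat j)})"
  define val where "val = (\<lambda>k j. sq' k (from_nat j))"
  have valV: "\<And>k j. val k j \<in> V j"
    using v' by (auto simp: val_def V_def sq'_def valid_sched_def)
  have finV: "\<And>j. finite (V j)" by (simp add: V_def finite_succs)
  interpret ss: subseqs "\<lambda>n r. \<exists>c. \<forall>k. val (r k) n = c"
  proof
    fix n and s0 :: "nat \<Rightarrow> nat" assume "strict_mono s0"
    let ?\<phi> = "\<lambda>k. val (s0 k) n"
    have "range ?\<phi> \<subseteq> V n" using valV by blast
    then have fr: "finite (range ?\<phi>)" using finV finite_subset by blast
    have "\<exists>y. infinite (?\<phi> -` {y})" using inf_img_fin_dom[OF fr] by blast
    then obtain y where inf: "infinite (?\<phi> -` {y})" by blast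
    let ?S = "?\<phi> -` {y}"
    have sm: "strict_mono (enumerate ?S)" using strict_mono_enumerate[OF inf] .
    have ev: "\<forall>k. val ((s0 \<circ> enumerate ?S) k) n = y" using enumerate_in_set[OF inf] by simp
    show "\<exists>r'::nat\<Rightarrow>nat. strict_mono r' \<and> (\<exists>c. \<forall>k. val ((s0 \<circ> r') k) n = c)"
      apply (rule exI[of _ "enumerate ?S"])
      apply (rule conjI[OF sm])
      apply (rule exI[of _ y])
      apply (rule ev)
      done
  qed
  have stab: "\<And>n. \<exists>c. \<forall>k. val ((ss.diagseq \<circ> (+) (Suc n)) k) n = c"
    by (rule ss.diagseq_holds) auto
  define st where "st = (\<lambda>h::('l,'v) state list. val (ss.diagseq (Suc (to_nat h))) (to_nat h))"
  have conv: "\<And>h j. Suc (to_nat h) \<le> j \<Longrightarrow> sq' (ss.diagseq j) h = st h"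
  proof -
    fix h :: "('l,'v) state list" and j assume j: "Suc (to_nat h) \<le> j"
    obtain c where c: "\<forall>k. val (ss.diagseq (Suc (to_nat h) + k)) (to_nat h) = c"
      using stab[of "to_nat h"] by auto
    have "val (ss.diagseq j) (to_nat h) = c" using c[rule_format, of "j - Suc (to_nat h)"] j by simp
    moreover have "st h = c" using c[rule_format, of 0] by (simp add: st_def)
    ultimately show "sq' (ss.diagseq j) h = st h" by (simp add: val_def)
  qed
  have vst: "valid_sched G st"
    unfolding valid_sched_def
  proof (intro allI impI)
    fix p :: "('l,'v) state list" assume "p \<noteq> [] \<and> kind G (fst (last p)) = NondetLoc"
    then have "sq' (ss.diagseq (Suc (to_nat p))) p \<in> succs G (last p)"
      using v' unfolding valid_sched_def by blast
    then show "st p \<in> succs G (last p)" using conv[OF le_refl] by simp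
  qed
  have big: "\<And>L. fsum G st x (Suc L) > \<epsilon>"
  proof -
    fix L
    define H where "H = (\<lambda>(ys, k). [x] @ take k ys) ` ({ys. length ys = L \<and> chain G x ys} \<times> {..<L})"
    have finH: "finite H" unfolding H_def
      by (rule finite_imageI, rule finite_cartesian_product, rule finite_chains, simp)
    define j where "j = max (Suc L) (Suc (Max (to_nat ` H)))"
    have jH: "\<And>h. h \<in> H \<Longrightarrow> Suc (to_nat h) \<le> j"
    proof -
      fix h assume "h \<in> H"
      then have "to_nat h \<le> Max (to_nat ` H)" using finH by (intro Max_ge) auto
      then show "Suc (to_nat h) \<le> j" by (simp add: j_def)
    qed
    have eqs: "fsum G st x (Suc L) = fsum G (sq' (ss.diagseq j)) x (Suc L)"
      unfolding fsum_def
    proof (rule sum.cong[OF refl])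
      fix xs assume "xs \<in> {xs \<in> Good G x (Suc L). term_state G \<notin> set xs}"
      then obtain ys where xs: "xs = x # ys" and l: "length ys = L" and c: "chain G x ys"
        by (auto simp: Good_def)
      have "path_prob_from G st [x] ys = path_prob_from G (sq' (ss.diagseq j)) [x] ys"
      proof (rule ppf_cong, intro allI impI)
        fix k assume k: "k < length ys"
        have "[x] @ take k ys \<in> H" unfolding H_def using k l c
          by (intro image_eqI[of _ _ "(ys, k)"]) auto
        then show "st ([x] @ take k ys) = sq' (ss.diagseq j) ([x] @ take k ys)"
          using conv jH by auto
      qed
      then show "cyl_prob G st x xs = cyl_prob G (sq' (ss.diagseq j)) x xs" by (simp add: xs)
    qed
    have "j \<le> ss.diagseq j" using seq_suble[OF ss.subseq_diagseq] by blast
    then have "L \<le> ss.diagseq j" by (simp add: j_def)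
    then have "fsum G (sq' (ss.diagseq j)) x (Suc (ss.diagseq j)) \<le> fsum G (sq' (ss.diagseq j)) x (Suc L)"
      by (rule fsum_mono[OF wf v'])
    then show "fsum G st x (Suc L) > \<epsilon>" using f'[of "ss.diagseq j"] eqs by simp
  qed
  have xT: "x \<noteq> term_state G"
  proof
    assume "x = term_state G"
    then have "{xs \<in> Good G x (Suc 0). term_state G \<notin> set xs} = {}" by (auto simp: Good_def)
    then have "fsum G st x (Suc 0) = 0" unfolding fsum_def by (simp only: sum.empty)
    then show False using big[of 0] eps by simp
  qed
  obtain ys where ch: "chain G (init_state G) ys" and lx: "last (init_state G # ys) = x"
    using xR reach_chain unfolding Reach_def by blast
  obtain s' p where vs': "valid_sched G s'" and pp: "p > 0"
    and bnd: "\<And>L. fsum G s' (init_state G) (length ys + Suc L) \<ge> p * fsum G st x (Suc L)"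
    using compose_bound[OF wf ab vst ch lx xT] by blast
  let ?M = "run_measure G s' (init_state G)"
  interpret PM: prob_space ?M using run_measure_props[OF wf] by blast
  have fl: "\<And>i. measure ?M (Ev G (Suc i)) \<ge> p * \<epsilon>"
  proof -
    fix i
    have "p * \<epsilon> \<le> p * fsum G st x (Suc i)" using big[of i] pp by simp
    also have "\<dots> \<le> fsum G s' (init_state G) (length ys + Suc i)" by (rule bnd)
    also have "\<dots> \<le> fsum G s' (init_state G) (Suc i)"
      using fsum_mono[OF wf vs', of i "length ys + i"] by simp
    also have "\<dots> = measure ?M (Ev G (Suc i))" using fsum_meas[OF wf vs'] by simp
    finally show "measure ?M (Ev G (Suc i)) \<ge> p * \<epsilon>" .
  qed
  have lim: "(\<lambda>i. measure ?M (Ev G (Suc i))) \<longlonglongrightarrow> measure ?M (\<Inter>i. Ev G (Suc i))"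
  proof (rule PM.finite_Lim_measure_decseq)
    show "range (\<lambda>i. Ev G (Suc i)) \<subseteq> sets ?M" using Ev_sets[OF wf] by blast
    show "decseq (\<lambda>i. Ev G (Suc i))" unfolding decseq_def by (auto intro: Ev_mono[THEN subsetD])
  qed
  have ge: "measure ?M (\<Inter>i. Ev G (Suc i)) \<ge> p * \<epsilon>"
    by (rule LIMSEQ_le_const[OF lim]) (use fl in blast)
  have inter: "(\<Inter>i. Ev G (Suc i)) = {\<omega>. \<forall>k. \<omega> !! k \<noteq> term_state G}"
  proof (intro set_eqI iffI)
    fix \<omega> assume a: "\<omega> \<in> (\<Inter>i. Ev G (Suc i))"
    have "\<forall>k. \<omega> !! k \<noteq> term_state G"
    proof
      fix k
      have "\<omega> \<in> Ev G (Suc k)" using a by blast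
      then have "\<not> (\<exists>j<Suc k. \<omega> !! j = term_state G)" unfolding Ev_def mem_Collect_eq set_stake_iff .
      then show "\<omega> !! k \<noteq> term_state G" by blast
    qed
    then show "\<omega> \<in> {\<omega>. \<forall>k. \<omega> !! k \<noteq> term_state G}" by simp
  next
    fix \<omega> assume a: "\<omega> \<in> {\<omega>. \<forall>k. \<omega> !! k \<noteq> term_state G}"
    have "\<omega> \<in> Ev G (Suc i)" for i
    proof -
      have "\<not> (\<exists>j<Suc i. \<omega> !! j = term_state G)" using a by blast
      then show ?thesis unfolding Ev_def mem_Collect_eq set_stake_iff .
    qed
    then show "\<omega> \<in> (\<Inter>i. Ev G (Suc i))" by blast
  qed
  have Isets: "(\<Inter>i. Ev G (Suc i)) \<in> sets ?M"
    by (rule sets.countable_INT) (use Ev_sets[OF wf, of _ s' "init_state G"] in auto)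
  have compl: "{\<omega>. \<exists>k. \<omega> !! k \<in> {term_state G}} = space ?M - (\<Inter>i. Ev G (Suc i))"
    unfolding inter space_run[OF wf] by auto
  have "prob_reach G s' (init_state G) {term_state G} = 1 - measure ?M (\<Inter>i. Ev G (Suc i))"
    unfolding prob_reach_def compl by (rule PM.prob_compl[OF Isets])
  also have "\<dots> < 1" using ge pp eps by (smt (verit) mult_pos_pos)
  finally have lt: "prob_reach G s' (init_state G) {term_state G} < 1" .
  have "(INF s \<in> {s. valid_sched G s}. prob_reach G s (init_state G) {term_state G})
        \<le> prob_reach G s' (init_state G) {term_state G}"
  proof (rule cINF_lower)
    show "bdd_below ((\<lambda>s. prob_reach G s (init_state G) {term_state G}) ` {s. valid_sched G s})"
      by (rule bdd_belowI[of _ 0]) (auto simp: prob_reach_def)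
  qed (use vs' in simp)
  then show False using ast lt unfolding AST_def by simp
qed


lemma comb:
  fixes G :: "('l, 'v) cfg"
  assumes ab: "succs G (term_state G) = {term_state G}"
    and xs: "xs \<in> Good G x J" and J: "Suc L \<le> J"
    and hit: "set xs \<inter> Tn \<noteq> {}"
    and disj: "Tn \<inter> (\<Union> (set ` Good G x (Suc L)) \<union> {term_state G}) = {}"
  shows "term_state G \<notin> set (take (Suc L) xs)"
proof
  assume T: "term_state G \<in> set (take (Suc L) xs)"
  obtain ys where xs': "xs = x # ys" and l: "length ys = J - 1" and c: "chain G x ys"
    using xs by (auto simp: Good_def)
  have Ll: "L \<le> length ys" using l J by simp
  have c2: "chain G x (take L ys @ drop L ys)" using c by simp
  have T2: "term_state G \<in> set (x # take L ys)" using T xs' by simp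
  have d: "set (drop L ys) \<subseteq> {term_state G}" by (rule absorb[OF ab c2 T2])
  have "x # take L ys \<in> Good G x (Suc L)"
    using c2 Ll unfolding chain_append by (auto simp: Good_def)
  then have "set (x # take L ys) \<subseteq> \<Union> (set ` Good G x (Suc L))" by blast
  moreover have "set xs = set (x # take L ys) \<union> set (drop L ys)"
    using xs' by (metis append_take_drop_id set_append append_Cons)
  ultimately have "set xs \<subseteq> \<Union> (set ` Good G x (Suc L)) \<union> {term_state G}" using d by blast
  then show False using hit disj by blast
qed

lemma reach_bound:
  fixes G :: "('l::finite, 'v::finite) cfg"
  assumes wf: "wf_cfg G" and ab: "succs G (term_state G) = {term_state G}"
    and v: "valid_sched G s"
    and disj: "Tn \<inter> (\<Union> (set ` Good G x (Suc L)) \<union> {term_state G}) = {}"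
  shows "prob_reach G s x Tn \<le> fsum G s x (Suc L)"
proof -
  let ?M = "run_measure G s x"
  interpret PM: prob_space ?M using run_measure_props[OF wf] by blast
  have S: "sets ?M = sets (stream_space (count_space UNIV))" using run_measure_props[OF wf] by blast
  define A where "A = (\<lambda>J. {\<omega>. stake J \<omega> \<in> {xs. set xs \<inter> Tn \<noteq> {}}})"
  have Aeq: "\<And>J. A J = {\<omega>. \<exists>k<J. \<omega> !! k \<in> Tn}"
  proof -
    fix J
    have "\<And>\<omega>. (set (stake J \<omega>) \<inter> Tn \<noteq> {}) = (\<exists>z. z \<in> set (stake J \<omega>) \<and> z \<in> Tn)" by blast
    also have "\<And>\<omega>. (\<exists>z. z \<in> set (stake J \<omega>) \<and> z \<in> Tn) = (\<exists>z. (\<exists>k<J. \<omega> !! k = z) \<and> z \<in> Tn)"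
      by (simp only: set_stake_iff)
    also have "\<And>\<omega>. (\<exists>z. (\<exists>k<J. \<omega> !! k = z) \<and> z \<in> Tn) = (\<exists>k<J. \<omega> !! k \<in> Tn)" by blast
    finally show "A J = {\<omega>. \<exists>k<J. \<omega> !! k \<in> Tn}" unfolding A_def by simp
  qed
  have Asets: "\<And>J. A J \<in> sets ?M" unfolding A_def S by (rule stake_sets)
  have Ainc: "incseq A" unfolding incseq_def Aeq by (auto intro: less_le_trans)
  have UA: "(\<Union>J. A J) = {\<omega>. \<exists>k. \<omega> !! k \<in> Tn}" unfolding Aeq by auto
  have lim: "(\<lambda>J. measure ?M (A J)) \<longlonglongrightarrow> measure ?M (\<Union>J. A J)"
    by (rule PM.finite_Lim_measure_incseq) (use Asets Ainc in auto)
  have le: "measure ?M (A J) \<le> fsum G s x (Suc L)" if J: "Suc L \<le> J" for J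
  proof -
    have "measure ?M (A J) = (\<Sum>xs\<in>Good G x J \<inter> {xs. set xs \<inter> Tn \<noteq> {}}. cyl_prob G s x xs)"
      unfolding A_def using J by (intro meas_stake[OF wf v]) simp
    also have "\<dots> \<le> (\<Sum>xs\<in>Good G x J \<inter> {xs. term_state G \<notin> set (take (Suc L) xs)}. cyl_prob G s x xs)"
    proof (rule sum_mono2)
      show "finite (Good G x J \<inter> {xs. term_state G \<notin> set (take (Suc L) xs)})" using finite_Good by blast
      show "Good G x J \<inter> {xs. set xs \<inter> Tn \<noteq> {}} \<subseteq> Good G x J \<inter> {xs. term_state G \<notin> set (take (Suc L) xs)}"
        using comb[OF ab _ J _ disj] by blast
    qed (rule cyl_nonneg[OF wf])
    also have "\<dots> = measure ?M {\<omega>. stake J \<omega> \<in> {xs. term_state G \<notin> set (take (Suc L) xs)}}"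
      using J by (intro meas_stake[OF wf v, symmetric]) simp
    also have "{\<omega>. stake J \<omega> \<in> {xs. term_state G \<notin> set (take (Suc L) xs)}} = Ev G (Suc L)"
      using J by (auto simp: Ev_def take_stake min_def)
    also have "measure ?M (Ev G (Suc L)) = fsum G s x (Suc L)" by (rule fsum_meas[OF wf v]) simp
    finally show ?thesis .
  qed
  have "measure ?M (\<Union>J. A J) \<le> fsum G s x (Suc L)"
    by (rule LIMSEQ_le_const2[OF lim]) (use le in blast)
  then show ?thesis unfolding prob_reach_def UA .
qed


theorem mainTheorem4:
  fixes G :: "('l :: finite, 'v :: finite) cfg"
    and \<sigma> :: "nat \<Rightarrow> ('l, 'v) state"
    and N :: enat
  assumes wf: "wf_cfg G"
    and term_absorbing: "succs G (term_state G) = {term_state G}"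
    and ast: "AST G"
    and enum: "bij_betw \<sigma> {i. enat i < N} (Reach G)"
    and enum0: "\<sigma> 0 = term_state G"
  shows "\<forall>i. enat i < N \<longrightarrow>
           (\<lambda>n. SUP s \<in> {s. valid_sched G s}.
                   prob_reach G s (\<sigma> i) (\<sigma> ` {m. n \<le> m \<and> enat m < N})) \<longlonglongrightarrow> 0"
proof (intro allI impI)
  fix i assume iN: "enat i < N"
  define x where "x = \<sigma> i"
  have xR: "x \<in> Reach G" using enum iN by (auto simp: bij_betw_def x_def)
  have inj: "inj_on \<sigma> {i. enat i < N}" using enum by (simp add: bij_betw_def)
  have img: "\<sigma> ` {i. enat i < N} = Reach G" using enum by (simp add: bij_betw_def)
  have zN: "enat 0 < N" using iN by (metis enat_0 i0_less not_gr_zero zero_enat_def gr_zeroI le_less_trans zero_le)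
  define d where "d = (\<lambda>h::('l,'v) state list. SOME y. y \<in> succs G (last h))"
  have vd: "valid_sched G d"
    unfolding valid_sched_def d_def using succs_ne[OF wf] by (auto simp: some_in_eq)
  have pr_nonneg: "\<And>s A. prob_reach G s x A \<ge> 0" by (simp add: prob_reach_def)
  have pr_le1: "\<And>s A. prob_reach G s x A \<le> 1"
  proof -
    fix s A
    interpret PM: prob_space "run_measure G s x" using run_measure_props[OF wf] by blast
    show "prob_reach G s x A \<le> 1" unfolding prob_reach_def by (rule PM.prob_le_1)
  qed
  show "(\<lambda>n. SUP s \<in> {s. valid_sched G s}. prob_reach G s (\<sigma> i) (\<sigma> ` {m. n \<le> m \<and> enat m < N})) \<longlonglongrightarrow> 0"
    unfolding x_def[symmetric]
  proof (rule LIMSEQ_I)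
    fix r :: real assume r: "0 < r"
    obtain L where L: "\<forall>s. valid_sched G s \<longrightarrow> fsum G s x (Suc L) \<le> r / 2"
      using uniform[OF wf term_absorbing ast xR, of "r/2"] r by auto
    define F where "F = \<Union> (set ` Good G x (Suc L))"
    have finF: "finite F" unfolding F_def using finite_Good by blast
    have FR: "F \<subseteq> Reach G"
    proof
      fix z assume "z \<in> F"
      then obtain xs where xs: "xs \<in> Good G x (Suc L)" and z: "z \<in> set xs" by (auto simp: F_def)
      then obtain ys where "xs = x # ys" "chain G x ys" by (auto simp: Good_def)
      then show "z \<in> Reach G" using chain_Reach[OF xR] xR z by auto
    qed
    define idx where "idx = inv_into {i. enat i < N} \<sigma>"
    define n0 where "n0 = Suc (Max (idx ` F))"
    have disj: "\<sigma> ` {m. n \<le> m \<and> enat m < N} \<inter> (F \<union> {term_state G}) = {}" if n: "n0 \<le> n" for n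
    proof (rule ccontr)
      assume "\<sigma> ` {m. n \<le> m \<and> enat m < N} \<inter> (F \<union> {term_state G}) \<noteq> {}"
      then obtain m where m: "n \<le> m" "enat m < N" and mz: "\<sigma> m \<in> F \<union> {term_state G}" by blast
      show False
      proof (cases "\<sigma> m \<in> F")
        case True
        have "idx (\<sigma> m) = m" unfolding idx_def using inj m by (simp add: inv_into_f_f)
        moreover have "idx (\<sigma> m) \<le> Max (idx ` F)" using True finF by (intro Max_ge) auto
        ultimately show False using m n by (simp add: n0_def)
      next
        case False
        then have "\<sigma> m = \<sigma> 0" using mz enum0 by simp
        then have "m = 0" using inj m zN by (auto dest: inj_onD)
        then show False using m n by (simp add: n0_def)
      qed
    qed
    have bnd: "prob_reach G s x (\<sigma> ` {m. n \<le> m \<and> enat m < N}) \<le> r / 2"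
      if n: "n0 \<le> n" and v: "valid_sched G s" for n s
    proof -
      have "prob_reach G s x (\<sigma> ` {m. n \<le> m \<and> enat m < N}) \<le> fsum G s x (Suc L)"
        by (rule reach_bound[OF wf term_absorbing v]) (use disj[OF n] in \<open>simp add: F_def\<close>)
      then show ?thesis using L v by force
    qed
    show "\<exists>no. \<forall>n\<ge>no. norm ((SUP s \<in> {s. valid_sched G s}. prob_reach G s x (\<sigma> ` {m. n \<le> m \<and> enat m < N})) - 0) < r"
    proof (intro exI allI impI)
      fix n assume n: "n0 \<le> n"
      let ?f = "\<lambda>s. prob_reach G s x (\<sigma> ` {m. n \<le> m \<and> enat m < N})"
      have ne: "{s. valid_sched G s} \<noteq> {}" using vd by blast
      have up: "(SUP s \<in> {s. valid_sched G s}. ?f s) \<le> r / 2"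
        by (rule cSUP_least[OF ne]) (use bnd[OF n] in auto)
      have "?f d \<le> (SUP s \<in> {s. valid_sched G s}. ?f s)"
        by (rule cSUP_upper) (use vd pr_le1 in \<open>auto intro!: bdd_aboveI[of _ 1]\<close>)
      then have lo: "0 \<le> (SUP s \<in> {s. valid_sched G s}. ?f s)" using pr_nonneg[of d "\<sigma> ` {m. n \<le> m \<and> enat m < N}"] by linarith
      show "norm ((SUP s \<in> {s. valid_sched G s}. ?f s) - 0) < r" using up lo r by simp
    qed
  qed
qed

end
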